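(* If $a_n>0$ for all $n\ge2$, then $\sum_{n=2}^\infty a_n=4$.
   Context: Let $g:(-\pi^2,\infty)\to(0,\infty)$, $g(r)=\sinh(\sqrt r)/\sqrt r$ for $r>0$, $g(0)=1$, $g(r)=\sin(\sqrt{-r})/\sqrt{-r}$ for $-\pi^2<r<0$; it is a strictly increasing bijection with inverse $g^{-1}$. For $\eta>0$ define $G(\eta)=2\eta-2\,\mathrm{sgn}\big(4g^{-1}(\eta^{-1})+\pi^2\big)\sqrt{\eta^2+g^{-1}(\eta^{-1})}+g^{-1}(\eta^{-1})$. The coefficients $a_n$, $n\ge2$, are the Taylor coefficients at $\xi=0$ of $F(\xi)=(1-\xi)G\big(\frac1{1-\xi}\big)$, i.e. $F(\xi)=\sum_{n\ge2}a_n\xi^n$ near $0$ (equivalently, they are fixed by matching the right derivatives of all orders of $G$ at $\eta=1$ with those of $\sum_k a_k(\eta-1)^k/\eta^{k-1}$). *)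

theory Defs
  imports "HOL-Analysis.Analysis"
begin

definition gfun :: "real \<Rightarrow> real" where
  "gfun r = (if r > 0 then sinh (sqrt r) / sqrt r
             else if r = 0 then 1
             else sin (sqrt (- r)) / sqrt (- r))"

definition ginv :: "real \<Rightarrow> real" where
  "ginv = inv_into {- (pi\<^sup>2)<..} gfun"

definition Gfun :: "real \<Rightarrow> real" where
  "Gfun \<eta> = 2 * \<eta> - 2 * sgn (4 * ginv (1 / \<eta>) + pi\<^sup>2) * sqrt (\<eta>\<^sup>2 + ginv (1 / \<eta>))
             + ginv (1 / \<eta>)"

definition Ffun :: "real \<Rightarrow> real" where
  "Ffun \<xi> = (1 - \<xi>) * Gfun (1 / (1 - \<xi>))"

definition acoef :: "nat \<Rightarrow> real" where
  "acoef n = (deriv ^^ n) Ffun 0 / fact n"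

end

theory Submission
  imports Defs "HOL-Complex_Analysis.Complex_Analysis"
begin

lemma real_deriv_of_complex:
  fixes G :: "complex \<Rightarrow> complex"
  assumes "(G has_field_derivative D) (at (of_real x))"
  shows "((\<lambda>y. Re (G (of_real y))) has_field_derivative Re D) (at x)"
proof -
  have "((\<lambda>y. G (of_real y)) has_derivative (\<lambda>h. (of_real h) * D)) (at x)"
    using has_derivative_compose[OF bounded_linear.has_derivative[OF bounded_linear_of_real, OF has_derivative_ident]
        assms[unfolded has_field_derivative_def]] by (simp add: mult.commute)
  hence "((\<lambda>y. G (of_real y)) has_vector_derivative D) (at x)"
    by (simp add: has_vector_derivative_def scaleR_conv_of_real)
  thus ?thesis by (rule has_field_derivative_Re)
qed

lemma transfer_deriv:
  fixes Fc :: "complex \<Rightarrow> complex" and f :: "real \<Rightarrow> real"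
  assumes hol: "Fc holomorphic_on ball (of_real x0) e"
    and eq: "\<And>x. \<bar>x - x0\<bar> < e \<Longrightarrow> Fc (of_real x) = of_real (f x)"
  shows "\<bar>x - x0\<bar> < e \<Longrightarrow> (deriv ^^ n) f x = Re ((deriv ^^ n) Fc (of_real x))"
proof (induction n arbitrary: x)
  case 0
  then show ?case using eq by simp
next
  case (Suc n)
  let ?G = "(deriv ^^ n) Fc"
  have holG: "?G holomorphic_on ball (of_real x0) e"
    by (intro holomorphic_higher_deriv hol) auto
  have inb: "of_real x \<in> ball (of_real x0 :: complex) e"
    using Suc.prems by (simp add: dist_norm abs_minus_commute flip: of_real_diff)
  have "(?G has_field_derivative deriv ?G (of_real x)) (at (of_real x))"
    using holG inb by (intro holomorphic_derivI[of _ "ball (of_real x0) e"]) auto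
  hence d1: "((\<lambda>y. Re (?G (of_real y))) has_field_derivative Re (deriv ?G (of_real x))) (at x)"
    by (rule real_deriv_of_complex)
  have d2: "((deriv ^^ n) f has_field_derivative Re (deriv ?G (of_real x))) (at x)"
  proof (rule has_field_derivative_transform_within_open[OF d1, of "{x0 - e <..< x0 + e}"])
    show "x \<in> {x0 - e<..<x0 + e}" using Suc.prems by auto
    fix y assume "y \<in> {x0 - e<..<x0 + e}"
    hence "\<bar>y - x0\<bar> < e" by auto
    thus "Re (?G (of_real y)) = (deriv ^^ n) f y" using Suc.IH by simp
  qed auto
  show ?case using DERIV_imp_deriv[OF d2] by simp
qed

lemma transfer_taylor:
  fixes Fc :: "complex \<Rightarrow> complex" and f :: "real \<Rightarrow> real"
  assumes hol: "Fc holomorphic_on ball (of_real x0) e"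
    and eq: "\<And>x. \<bar>x - x0\<bar> < e \<Longrightarrow> Fc (of_real x) = of_real (f x)"
    and t: "\<bar>t\<bar> < e"
  shows "(\<lambda>k. (deriv ^^ k) f x0 / fact k * t ^ k) sums f (x0 + t)"
proof -
  have "of_real (x0 + t) \<in> ball (of_real x0 :: complex) e"
    using t by (simp add: dist_norm)
  from holomorphic_power_series[OF hol this]
  have "(\<lambda>k. (deriv ^^ k) Fc (of_real x0) / fact k * (of_real t) ^ k) sums Fc (of_real (x0 + t))"
    by simp
  hence "(\<lambda>k. Re ((deriv ^^ k) Fc (of_real x0) / fact k * (of_real t) ^ k)) sums Re (Fc (of_real (x0 + t)))"
    by (rule sums_Re)
  moreover have "\<And>k. Re ((deriv ^^ k) Fc (of_real x0) / fact k * (of_real t) ^ k) = (deriv ^^ k) f x0 / fact k * t ^ k"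
  proof -
    fix k
    have r: "\<And>w::complex. \<And>r::real. Re (w * of_real r) = Re w * r" by simp
    have "(deriv ^^ k) Fc (of_real x0) / fact k * (of_real t) ^ k = ((deriv ^^ k) Fc (of_real x0) / fact k) * of_real (t ^ k)"
      by simp
    also have "Re \<dots> = Re ((deriv ^^ k) Fc (of_real x0)) / fact k * t ^ k"
    proof -
      have "(fact k :: complex) = of_real (fact k)" by simp
      then show ?thesis unfolding r by (simp only: Re_divide_of_real)
    qed
    finally show "Re ((deriv ^^ k) Fc (of_real x0) / fact k * (of_real t) ^ k) = (deriv ^^ k) f x0 / fact k * t ^ k"
      using transfer_deriv[OF hol eq, of x0] \<open>\<bar>t\<bar> < e\<close> by simp
  qed
  moreover have "Re (Fc (of_real (x0 + t))) = f (x0 + t)" using eq[of "x0+t"] t by simp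
  ultimately show ?thesis by simp
qed

definition locext :: "(real \<Rightarrow> real) \<Rightarrow> real \<Rightarrow> bool" where
  "locext f x0 \<longleftrightarrow> (\<exists>e>0. \<exists>Fc. Fc holomorphic_on ball (of_real x0) e \<and>
      (\<forall>x. \<bar>x - x0\<bar> < e \<longrightarrow> Fc (of_real x) = of_real (f x)))"

lemma fps_deriv_funpow_nth:
  "((fps_deriv ^^ k) (A :: real fps)) $ n = A $ (n + k) * fact (n + k) / fact n"
proof (induction k arbitrary: n)
  case 0 then show ?case by simp
next
  case (Suc k)
  have "((fps_deriv ^^ Suc k) A) $ n = of_nat (n + 1) * ((fps_deriv ^^ k) A) $ (n + 1)"
    by simp
  also have "\<dots> = of_nat (n + 1) * (A $ (n + 1 + k) * fact (n + 1 + k) / fact (n + 1))"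
    using Suc.IH by simp
  also have "\<dots> = A $ (n + Suc k) * fact (n + Suc k) / fact n"
    by (simp add: field_simps fact_Suc del: of_nat_Suc)
  finally show ?case .
qed

lemma higher_deriv_eval_fps_real:
  fixes A :: "real fps"
  assumes "norm x < fps_conv_radius A"
  shows "(deriv ^^ k) (eval_fps A) x = eval_fps ((fps_deriv ^^ k) A) x"
  using assms
proof (induction k arbitrary: A)
  case 0 then show ?case by simp
next
  case (Suc k A)
  have "(deriv ^^ Suc k) (eval_fps A) x = (deriv ^^ k) (deriv (eval_fps A)) x"
    unfolding funpow_Suc_right o_def ..
  also have "eventually (\<lambda>z::real. z \<in> eball 0 (fps_conv_radius A)) (nhds x)"
    using Suc.prems by (intro eventually_nhds_in_open) (auto simp: dist_norm)
  hence "eventually (\<lambda>z. deriv (eval_fps A) z = eval_fps (fps_deriv A) z) (nhds x)"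
    by eventually_elim (simp add: eval_fps_deriv dist_norm)
  hence "(deriv ^^ k) (deriv (eval_fps A)) x = (deriv ^^ k) (eval_fps (fps_deriv A)) x"
    by (intro higher_deriv_cong_ev refl)
  also have "\<dots> = eval_fps ((fps_deriv ^^ k) (fps_deriv A)) x"
    using Suc.prems fps_conv_radius_deriv[of A] by (intro Suc.IH) (auto intro: less_le_trans)
  also have "(fps_deriv ^^ k) (fps_deriv A) = (fps_deriv ^^ Suc k) A"
    unfolding funpow_Suc_right o_def ..
  finally show ?case .
qed

lemma binom_double_sum:
  fixes a :: "nat \<Rightarrow> real"
  shows "(\<Sum>m<M. a m * (x0 + t) ^ m) =
         (\<Sum>p\<in>{p. fst p + snd p < M}. a (snd p + fst p) * (fact (snd p + fst p) / (fact (snd p) * fact (fst p))) * x0 ^ snd p * t ^ fst p)"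
proof -
  have eq: "a (snd p + fst p) * (of_nat (snd p + fst p choose fst p) * t ^ fst p * x0 ^ (snd p)) =
          a (snd p + fst p) * (fact (snd p + fst p) / (fact (snd p) * fact (fst p))) * x0 ^ snd p * t ^ fst p" for p :: "nat \<times> nat"
  proof -
    have "of_nat (snd p + fst p choose fst p) = (fact (snd p + fst p) / (fact (fst p) * fact (snd p)) :: real)"
      by (subst binomial_fact) auto
    then show ?thesis by (simp add: mult.commute mult.left_commute)
  qed
  have "(\<Sum>m<M. a m * (x0 + t) ^ m) = (\<Sum>m<M. \<Sum>k\<le>m. a m * (of_nat (m choose k) * t ^ k * x0 ^ (m - k)))"
    by (simp add: binomial_ring[of t x0] add.commute sum_distrib_left)
  also have "\<dots> = (\<Sum>q\<in>Sigma {..<M} (\<lambda>m. {..m}). a (fst q) * (of_nat (fst q choose snd q) * t ^ snd q * x0 ^ (fst q - snd q)))"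
    by (subst sum.Sigma) (auto simp: case_prod_beta)
  also have "\<dots> = (\<Sum>p\<in>{p. fst p + snd p < M}. a (snd p + fst p) * (fact (snd p + fst p) / (fact (snd p) * fact (fst p))) * x0 ^ snd p * t ^ fst p)"
    by (rule sum.reindex_bij_witness[where i = "\<lambda>p. (snd p + fst p, fst p)" and j = "\<lambda>q. (snd q, fst q - snd q)"])
       (auto simp: binomial_fact mult_ac)
  finally show ?thesis .
qed

lemma fps_conv_radius_deriv_funpow:
  fixes A :: "'a :: {banach, real_normed_field} fps"
  shows "fps_conv_radius ((fps_deriv ^^ k) A) \<ge> fps_conv_radius A"
proof (induction k)
  case 0 then show ?case by simp
next
  case (Suc k)
  then show ?case using fps_conv_radius_deriv[of "(fps_deriv ^^ k) A"] by auto
qed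

lemma extend_step:
  fixes f :: "real \<Rightarrow> real" and a :: "nat \<Rightarrow> real"
  assumes anonneg: "\<And>n. a n \<ge> 0"
    and good: "\<And>x. 0 \<le> x \<Longrightarrow> x < b \<Longrightarrow> (\<lambda>n. a n * x ^ n) sums f x"
    and bpos: "0 < b"
    and loc: "locext f b"
  obtains b' where "b' > b" "\<And>x. 0 \<le> x \<Longrightarrow> x < b' \<Longrightarrow> (\<lambda>n. a n * x ^ n) sums f x"
proof -
  obtain e Fc where e: "e > 0" and hol: "Fc holomorphic_on ball (of_real b) e"
    and eq: "\<And>x. \<bar>x - b\<bar> < e \<Longrightarrow> Fc (of_real x) = of_real (f x)"
    using loc unfolding locext_def by blast
  define \<epsilon> where "\<epsilon> = min e b"
  have \<epsilon>: "\<epsilon> > 0" "\<epsilon> \<le> e" "\<epsilon> \<le> b" using e bpos by (auto simp: \<epsilon>_def)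
  define x0 where "x0 = b - \<epsilon> / 4"
  have x0: "0 < x0" "x0 < b" using \<epsilon> by (auto simp: x0_def)
  have sub: "ball (of_real x0) (3 * \<epsilon> / 4) \<subseteq> ball (of_real b :: complex) e"
  proof
    fix z :: complex assume "z \<in> ball (of_real x0) (3 * \<epsilon> / 4)"
    hence "dist (of_real x0) z < 3 * \<epsilon> / 4" by simp
    moreover have "dist (of_real b) (of_real x0 :: complex) = \<epsilon> / 4"
      using \<epsilon> by (simp add: x0_def dist_norm flip: of_real_diff)
    ultimately have "dist (of_real b) z < \<epsilon>"
      using dist_triangle[of "of_real b" z "of_real x0"] by linarith
    thus "z \<in> ball (of_real b) e" using \<epsilon> by simp
  qed
  have hol0: "Fc holomorphic_on ball (of_real x0) (3 * \<epsilon> / 4)"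
    using hol sub by (rule holomorphic_on_subset)
  have eq0: "Fc (of_real x) = of_real (f x)" if "\<bar>x - x0\<bar> < 3 * \<epsilon> / 4" for x
    using that \<epsilon> by (intro eq) (auto simp: x0_def abs_if split: if_splits)
  have taylor: "(\<lambda>k. (deriv ^^ k) f x0 / fact k * t ^ k) sums f (x0 + t)" if "\<bar>t\<bar> < 3 * \<epsilon> / 4" for t
    using transfer_taylor[OF hol0 eq0 that] by simp
  define A where "A = Abs_fps a"
  have rad: "ereal b \<le> fps_conv_radius A"
    unfolding fps_conv_radius_def A_def fps_nth_Abs_fps
  proof (rule conv_radius_geI_ex')
    fix r :: real assume "0 < r" "ereal r < ereal b"
    then show "summable (\<lambda>n. a n * of_real r ^ n)"
      using good[of r] by (auto simp: sums_iff)
  qed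
  have fP: "eval_fps A x = f x" if "0 \<le> x" "x < b" for x
  proof -
    have "ereal (norm x) < ereal b" using that by simp
    hence "norm x < fps_conv_radius A" using rad by (rule less_le_trans)
    from sums_eval_fps[OF this] have "(\<lambda>n. a n * x ^ n) sums eval_fps A x" by (simp add: A_def)
    with good[OF that] show ?thesis by (simp add: sums_iff)
  qed
  have derivs: "(deriv ^^ k) f x0 = eval_fps ((fps_deriv ^^ k) A) x0" for k
  proof -
    have "eventually (\<lambda>x. x \<in> {0<..<b}) (nhds x0)"
      using x0 by (intro eventually_nhds_in_open) auto
    hence "eventually (\<lambda>x. f x = eval_fps A x) (nhds x0)"
      by eventually_elim (use fP in auto)
    hence "(deriv ^^ k) f x0 = (deriv ^^ k) (eval_fps A) x0"
      by (intro higher_deriv_cong_ev refl)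
    also have "\<dots> = eval_fps ((fps_deriv ^^ k) A) x0"
    proof (intro higher_deriv_eval_fps_real)
      have "ereal (norm x0) < ereal b" using x0 by simp
      thus "ereal (norm x0) < fps_conv_radius A" using rad by (rule less_le_trans)
    qed
    finally show ?thesis .
  qed
  define c where "c = (\<lambda>t k n. a (n + k) * (fact (n + k) / (fact n * fact k)) * x0 ^ n * t ^ k)"
  have csum: "(\<lambda>n. c t k n) sums ((deriv ^^ k) f x0 / fact k * t ^ k)" for t k
  proof -
    have "norm x0 < fps_conv_radius ((fps_deriv ^^ k) A)"
    proof -
      have "ereal (norm x0) < ereal b" using x0 by simp
      thus ?thesis using rad fps_conv_radius_deriv_funpow[of A k] by (meson less_le_trans)
    qed
    from sums_eval_fps[OF this]
    have "(\<lambda>n. a (n + k) * fact (n + k) / fact n * x0 ^ n) sums eval_fps ((fps_deriv ^^ k) A) x0"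
      by (simp add: fps_deriv_funpow_nth A_def)
    hence "(\<lambda>n. a (n + k) * fact (n + k) / fact n * x0 ^ n * (t ^ k / fact k)) sums (eval_fps ((fps_deriv ^^ k) A) x0 * (t ^ k / fact k))"
      by (rule sums_mult2)
    thus ?thesis by (simp add: c_def derivs field_simps)
  qed
  have cnonneg: "c t k n \<ge> 0" if "t \<ge> 0" for t k n
    using that x0 anonneg by (auto simp: c_def)
  have main: "(\<lambda>m. a m * (x0 + t) ^ m) sums f (x0 + t)" if t: "0 \<le> t" "t < 3 * \<epsilon> / 4" for t
  proof -
    define dk where "dk = (\<lambda>k. (deriv ^^ k) f x0 / fact k * t ^ k)"
    have dsum: "dk sums f (x0 + t)" unfolding dk_def using taylor t by auto
    have dnonneg: "dk k \<ge> 0" for k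
      using sums_le[of "\<lambda>_. 0" "c t k" 0 "dk k"] csum[of t k] cnonneg[OF t(1)] by (auto simp: dk_def)
    have ck_le: "(\<Sum>n<N. c t k n) \<le> dk k" for k N
      using sum_le_suminf[of "c t k" "{..<N}"] csum[of t k] cnonneg[OF t(1)]
      by (auto simp: sums_iff dk_def)
    have fin: "finite {p :: nat \<times> nat. fst p + snd p < M}" for M
      by (rule finite_subset[of _ "{..<M} \<times> {..<M}"]) auto
    have part: "(\<Sum>m<M. a m * (x0 + t) ^ m) = (\<Sum>p\<in>{p. fst p + snd p < M}. c t (fst p) (snd p))" for M
      unfolding binom_double_sum c_def by (simp add: add.commute)
    have bound1: "(\<Sum>m<M. a m * (x0 + t) ^ m) \<le> f (x0 + t)" for M
    proof -
      have "(\<Sum>m<M. a m * (x0 + t) ^ m) \<le> (\<Sum>p\<in>{..<M} \<times> {..<M}. c t (fst p) (snd p))"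
        unfolding part by (rule sum_mono2) (auto intro: cnonneg t)
      also have "\<dots> = (\<Sum>k<M. \<Sum>n<M. c t k n)"
        by (simp add: sum.cartesian_product case_prod_beta)
      also have "\<dots> \<le> (\<Sum>k<M. dk k)" by (intro sum_mono ck_le)
      also have "\<dots> \<le> f (x0 + t)"
        using sum_le_suminf[of dk "{..<M}"] dsum dnonneg by (auto simp: sums_iff)
      finally show ?thesis .
    qed
    have summ: "summable (\<lambda>m. a m * (x0 + t) ^ m)"
      by (rule summableI_nonneg_bounded[OF _ bound1]) (use anonneg x0 t in auto)
    define S where "S = (\<Sum>m. a m * (x0 + t) ^ m)"
    have S1: "S \<le> f (x0 + t)" unfolding S_def by (rule suminf_le_const[OF summ bound1])
    have S2: "(\<Sum>k<K. dk k) \<le> S" for K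
    proof -
      have lim: "(\<lambda>N. \<Sum>k<K. \<Sum>n<N. c t k n) \<longlonglongrightarrow> (\<Sum>k<K. dk k)"
        by (intro tendsto_sum) (use csum in \<open>auto simp: sums_def dk_def\<close>)
      have "(\<Sum>k<K. \<Sum>n<N. c t k n) \<le> S" for N
      proof -
        have "(\<Sum>k<K. \<Sum>n<N. c t k n) = (\<Sum>p\<in>{..<K} \<times> {..<N}. c t (fst p) (snd p))"
          by (simp add: sum.cartesian_product case_prod_beta)
        also have "\<dots> \<le> (\<Sum>p\<in>{p. fst p + snd p < K + N}. c t (fst p) (snd p))"
          by (rule sum_mono2[OF fin]) (auto intro: cnonneg t)
        also have "\<dots> = (\<Sum>m<K + N. a m * (x0 + t) ^ m)" by (rule part[symmetric])
        also have "\<dots> \<le> S" unfolding S_def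
          by (rule sum_le_suminf[OF summ]) (use anonneg x0 t in auto)
        finally show ?thesis .
      qed
      thus ?thesis by (intro LIMSEQ_le_const2[OF lim]) auto
    qed
    have "f (x0 + t) \<le> S"
      using suminf_le_const[of dk S] dsum S2 by (auto simp: sums_iff)
    with S1 have "S = f (x0 + t)" by simp
    with summ show ?thesis unfolding S_def by (metis summable_sums)
  qed
  show ?thesis
  proof (rule that[of "x0 + 3 * \<epsilon> / 4"])
    show "b < x0 + 3 * \<epsilon> / 4" using \<epsilon> by (simp add: x0_def)
    fix x assume x: "0 \<le> x" "x < x0 + 3 * \<epsilon> / 4"
    show "(\<lambda>n. a n * x ^ n) sums f x"
    proof (cases "x < b")
      case True then show ?thesis using good x by simp
    next
      case False
      then show ?thesis using main[of "x - x0"] x x0 by simp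
    qed
  qed
qed

lemma pringsheim_real:
  fixes f :: "real \<Rightarrow> real"
  assumes loc: "\<And>x0. 0 \<le> x0 \<Longrightarrow> x0 < 1 \<Longrightarrow> locext f x0"
    and pos: "\<And>n. (deriv ^^ n) f 0 \<ge> 0"
    and x: "0 \<le> x" "x < 1"
  shows "(\<lambda>n. (deriv ^^ n) f 0 / fact n * x ^ n) sums f x"
proof -
  define a where "a = (\<lambda>n. (deriv ^^ n) f 0 / fact n)"
  have anonneg: "a n \<ge> 0" for n using pos[of n] by (simp add: a_def)
  define good where "good = (\<lambda>b. \<forall>x. 0 \<le> x \<and> x < b \<longrightarrow> (\<lambda>n. a n * x ^ n) sums f x)"
  define T where "T = {b. b \<le> 1 \<and> good b}"
  have T0: "0 \<in> T" by (auto simp: T_def good_def)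
  have bdd: "bdd_above T" by (auto simp: T_def bdd_above_def)
  define \<rho> where "\<rho> = Sup T"
  have Tne: "T \<noteq> {}" using T0 by blast
  have \<rho>1: "\<rho> \<le> 1" unfolding \<rho>_def by (rule cSup_least[OF Tne]) (auto simp: T_def)
  have good\<rho>: "good \<rho>"
    unfolding good_def
  proof (intro allI impI)
    fix x assume "0 \<le> x \<and> x < \<rho>"
    then obtain b where "b \<in> T" "x < b" using less_cSup_iff[OF _ bdd, of x] T0 by (auto simp: \<rho>_def)
    thus "(\<lambda>n. a n * x ^ n) sums f x" using \<open>0 \<le> x \<and> x < \<rho>\<close> by (auto simp: T_def good_def)
  qed
  have \<rho>pos: "\<rho> > 0"
  proof -
    obtain e Fc where e: "e > 0" and hol: "Fc holomorphic_on ball (of_real 0) e"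
      and eq: "\<And>x. \<bar>x - 0\<bar> < e \<Longrightarrow> Fc (of_real x) = of_real (f x)"
      using loc[of 0] unfolding locext_def by auto
    have "good (min e 1)" unfolding good_def
    proof (intro allI impI)
      fix x assume "0 \<le> x \<and> x < min e 1"
      hence "\<bar>x\<bar> < e" by auto
      from transfer_taylor[OF hol eq this] show "(\<lambda>n. a n * x ^ n) sums f x" by (simp add: a_def)
    qed
    hence "min e 1 \<in> T" by (auto simp: T_def)
    hence "min e 1 \<le> \<rho>" unfolding \<rho>_def using bdd by (rule cSup_upper)
    thus ?thesis using e by linarith
  qed
  have "\<rho> = 1"
  proof (rule ccontr)
    assume "\<rho> \<noteq> 1"
    with \<rho>1 have "\<rho> < 1" by simp
    obtain b' where b': "b' > \<rho>" "\<And>x. 0 \<le> x \<Longrightarrow> x < b' \<Longrightarrow> (\<lambda>n. a n * x ^ n) sums f x"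
    proof -
      have l: "locext f \<rho>" using loc \<rho>pos \<open>\<rho> < 1\<close> by simp
      show ?thesis
        by (rule extend_step[of a \<rho> f, OF anonneg _ \<rho>pos l, OF _ that]) (use good\<rho> in \<open>auto simp: good_def\<close>)
    qed
    have "min b' 1 \<in> T" using b' by (auto simp: T_def good_def)
    hence "min b' 1 \<le> \<rho>" unfolding \<rho>_def using bdd by (rule cSup_upper)
    with b' \<open>\<rho> < 1\<close> show False by linarith
  qed
  with good\<rho> x show ?thesis by (auto simp: good_def a_def)
qed

definition gco :: "nat \<Rightarrow> real" where "gco k = 1 / fact (2 * k + 1)"
definition cco :: "nat \<Rightarrow> real" where "cco k = 1 / fact (2 * k)"
definition ofr :: "real fps \<Rightarrow> complex fps" where "ofr A = Abs_fps (\<lambda>n. of_real (A $ n))"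
definition GS :: "real fps" where "GS = Abs_fps gco"
definition CS :: "real fps" where "CS = Abs_fps cco"
definition gsr :: "real \<Rightarrow> real" where "gsr = eval_fps GS"
definition csr :: "real \<Rightarrow> real" where "csr = eval_fps CS"
definition gsc :: "complex \<Rightarrow> complex" where "gsc = eval_fps (ofr GS)"
definition csc :: "complex \<Rightarrow> complex" where "csc = eval_fps (ofr CS)"

lemma radius_inf_real:
  fixes A :: "real fps"
  assumes "\<And>n. \<bar>A $ n\<bar> \<le> 1 / fact n"
  shows "fps_conv_radius A = \<infinity>"
  unfolding fps_conv_radius_def
proof (rule conv_radius_inftyI'')
  fix z :: real
  show "summable (\<lambda>n. A $ n * z ^ n)"
  proof (rule summable_comparison_test)
    show "\<exists>N. \<forall>n\<ge>N. norm (A $ n * z ^ n) \<le> \<bar>z\<bar> ^ n /\<^sub>R fact n"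
      using assms by (auto simp: abs_mult power_abs divide_inverse intro!: mult_right_mono)
    show "summable (\<lambda>n. \<bar>z\<bar> ^ n /\<^sub>R fact n)" by (rule summable_exp_generic)
  qed
qed

lemma radius_inf_cplx:
  fixes A :: "real fps"
  assumes "\<And>n. \<bar>A $ n\<bar> \<le> 1 / fact n"
  shows "fps_conv_radius (ofr A) = \<infinity>"
  unfolding fps_conv_radius_def
proof (rule conv_radius_inftyI'')
  fix z :: complex
  show "summable (\<lambda>n. ofr A $ n * z ^ n)"
  proof (rule summable_comparison_test)
    show "\<exists>N. \<forall>n\<ge>N. norm (ofr A $ n * z ^ n) \<le> norm z ^ n /\<^sub>R fact n"
      using assms by (auto simp: ofr_def norm_mult norm_power divide_inverse intro!: mult_right_mono)
    show "summable (\<lambda>n. norm z ^ n /\<^sub>R fact n)" by (rule summable_exp_generic)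
  qed
qed

lemma gco_bound: "\<bar>gco n\<bar> \<le> 1 / fact n"
proof -
  have "fact n \<le> (fact (2 * n + 1) :: real)" by (rule fact_mono) simp
  thus ?thesis unfolding gco_def by (auto intro!: divide_left_mono)
qed
lemma cco_bound: "\<bar>cco n\<bar> \<le> 1 / fact n"
proof -
  have "fact n \<le> (fact (2 * n) :: real)" by (rule fact_mono) simp
  thus ?thesis unfolding cco_def by (auto intro!: divide_left_mono)
qed

lemma rad_GS: "fps_conv_radius GS = \<infinity>" using radius_inf_real[of GS] gco_bound by (simp add: GS_def)
lemma rad_CS: "fps_conv_radius CS = \<infinity>" using radius_inf_real[of CS] cco_bound by (simp add: CS_def)
lemma rad_GSc: "fps_conv_radius (ofr GS) = \<infinity>" using radius_inf_cplx[of GS] gco_bound by (simp add: GS_def)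
lemma rad_CSc: "fps_conv_radius (ofr CS) = \<infinity>" using radius_inf_cplx[of CS] cco_bound by (simp add: CS_def)

lemma rad_deriv_inf: "fps_conv_radius (A :: 'a :: {banach, real_normed_field} fps) = \<infinity> \<Longrightarrow> fps_conv_radius (fps_deriv A) = \<infinity>"
  using fps_conv_radius_deriv[of A] by simp

lemma eval_ofr:
  fixes A :: "real fps"
  assumes "fps_conv_radius A = \<infinity>" "fps_conv_radius (ofr A) = \<infinity>"
  shows "eval_fps (ofr A) (of_real x) = of_real (eval_fps A x)"
proof -
  have "(\<lambda>n. A $ n * x ^ n) sums eval_fps A x" using assms by (intro sums_eval_fps) auto
  hence "(\<lambda>n. of_real (A $ n * x ^ n) :: complex) sums of_real (eval_fps A x)" by (rule sums_of_real)
  moreover have "(\<lambda>n. ofr A $ n * (of_real x) ^ n) sums eval_fps (ofr A) (of_real x)"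
    using assms by (intro sums_eval_fps) auto
  ultimately show ?thesis by (simp add: ofr_def sums_iff)
qed

lemma fps_deriv_ofr: "fps_deriv (ofr A) = ofr (fps_deriv A)"
  by (simp add: fps_eq_iff ofr_def)

lemma gsc_real: "gsc (of_real x) = of_real (gsr x)"
  unfolding gsc_def gsr_def by (rule eval_ofr[OF rad_GS rad_GSc])
lemma csc_real: "csc (of_real x) = of_real (csr x)"
  unfolding csc_def csr_def by (rule eval_ofr[OF rad_CS rad_CSc])

lemma gsr_sums: "(\<lambda>n. gco n * h ^ n) sums gsr h"
  using sums_eval_fps[of h GS] rad_GS by (simp add: gsr_def GS_def)
lemma csr_sums: "(\<lambda>n. cco n * h ^ n) sums csr h"
  using sums_eval_fps[of h CS] rad_CS by (simp add: csr_def CS_def)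

lemma gsr_0: "gsr 0 = 1" unfolding gsr_def by (simp add: eval_fps_at_0 GS_def gco_def)
lemma csr_0: "csr 0 = 1" unfolding csr_def by (simp add: eval_fps_at_0 CS_def cco_def)

lemma gsr_neg: assumes "h < 0" shows "gsr h = sin (sqrt (-h)) / sqrt (-h)"
proof -
  define s where "s = sqrt (-h)"
  have s: "s > 0" "h = - (s ^ 2)" using assms by (auto simp: s_def)
  have "(\<lambda>n. (- 1) ^ n / fact (2 * n + 1) * s ^ (2 * n + 1) / s) sums (sin s / s)"
    by (intro sums_divide sin_paired)
  moreover have "(- 1) ^ n / fact (2 * n + 1) * s ^ (2 * n + 1) / s = gco n * h ^ n" for n
  proof -
    have e1: "s ^ (2 * n + 1) = s ^ (2 * n) * s" by simp
    have e2: "h ^ n = (- 1) ^ n * s ^ (2 * n)" by (simp add: s(2) power_minus[of "s^2"] power_mult)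
    show ?thesis using s(1) by (simp add: e1 e2 gco_def)
  qed
  ultimately have "(\<lambda>n. gco n * h ^ n) sums (sin s / s)" by simp
  with gsr_sums[of h] show ?thesis by (simp add: sums_iff s_def)
qed

lemma csr_neg: assumes "h \<le> 0" shows "csr h = cos (sqrt (-h))"
proof -
  define s where "s = sqrt (-h)"
  have s: "s \<ge> 0" "h = - (s ^ 2)" using assms by (auto simp: s_def)
  have "(\<lambda>n. (- 1) ^ n / fact (2 * n) * s ^ (2 * n)) sums (cos s)"
    by (rule cos_paired)
  moreover have "(- 1) ^ n / fact (2 * n) * s ^ (2 * n) = cco n * h ^ n" for n
  proof -
    have e2: "h ^ n = (- 1) ^ n * s ^ (2 * n)" by (simp add: s(2) power_minus[of "s^2"] power_mult)
    show ?thesis by (simp add: e2 cco_def)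
  qed
  ultimately have "(\<lambda>n. cco n * h ^ n) sums (cos s)" by simp
  with csr_sums[of h] show ?thesis by (simp add: sums_iff s_def)
qed

lemma sum_two: "sum f {m..<m + 2} = f m + f (Suc m)"
  by (simp add: numeral_2_eq_2)

lemma gsr_pos: assumes "h > 0" shows "gsr h = sinh (sqrt h) / sqrt h"
proof -
  define t where "t = sqrt h"
  have t: "t > 0" "h = t ^ 2" using assms by (auto simp: t_def)
  have "(\<lambda>n. sum (\<lambda>i. if even i then 0 else t ^ i /\<^sub>R fact i) {n * 2..<n * 2 + 2}) sums sinh t"
    by (intro sums_group sinh_converges) auto
  hence "(\<lambda>n. t ^ (2 * n + 1) / fact (2 * n + 1)) sums sinh t"
    by (simp add: sum_two mult.commute divide_inverse)
  hence "(\<lambda>n. t ^ (2 * n + 1) / fact (2 * n + 1) / t) sums (sinh t / t)" by (rule sums_divide)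
  moreover have "t ^ (2 * n + 1) / fact (2 * n + 1) / t = gco n * h ^ n" for n
  proof -
    have "t ^ (2 * n + 1) = t * h ^ n" by (simp add: t(2) power_mult)
    thus ?thesis using t by (simp add: gco_def)
  qed
  ultimately have "(\<lambda>n. gco n * h ^ n) sums (sinh t / t)" by simp
  with gsr_sums[of h] show ?thesis by (simp add: sums_iff t_def)
qed

lemma csr_pos: assumes "h \<ge> 0" shows "csr h = cosh (sqrt h)"
proof -
  define t where "t = sqrt h"
  have t: "t \<ge> 0" "h = t ^ 2" using assms by (auto simp: t_def)
  have "(\<lambda>n. sum (\<lambda>i. if even i then t ^ i /\<^sub>R fact i else 0) {n * 2..<n * 2 + 2}) sums cosh t"
    by (intro sums_group cosh_converges) auto
  hence "(\<lambda>n. t ^ (2 * n) / fact (2 * n)) sums cosh t"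
    by (simp add: sum_two mult.commute divide_inverse)
  moreover have "t ^ (2 * n) / fact (2 * n) = cco n * h ^ n" for n
  proof -
    have "t ^ (2 * n) = h ^ n" by (simp add: t(2) power_mult)
    thus ?thesis by (simp add: cco_def)
  qed
  ultimately have "(\<lambda>n. cco n * h ^ n) sums (cosh t)" by simp
  with csr_sums[of h] show ?thesis by (simp add: sums_iff t_def)
qed

lemma gfun_eq: "gfun h = gsr h"
  by (auto simp: gfun_def gsr_neg gsr_pos gsr_0)

definition gsr' :: "real \<Rightarrow> real" where "gsr' = eval_fps (fps_deriv GS)"

lemma rad_GS': "fps_conv_radius (fps_deriv GS) = \<infinity>" by (rule rad_deriv_inf[OF rad_GS])
lemma rad_GSc': "fps_conv_radius (ofr (fps_deriv GS)) = \<infinity>"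
  using rad_deriv_inf[OF rad_GSc] by (simp add: fps_deriv_ofr)

lemma gsr_deriv: "(gsr has_real_derivative gsr' h) (at h)"
  unfolding gsr_def gsr'_def by (rule has_field_derivative_eval_fps) (simp add: rad_GS)

lemma gsc_deriv: "(gsc has_field_derivative of_real (gsr' h)) (at (of_real h))"
proof -
  have "(gsc has_field_derivative eval_fps (fps_deriv (ofr GS)) (of_real h)) (at (of_real h))"
    unfolding gsc_def by (rule has_field_derivative_eval_fps) (simp add: rad_GSc)
  also have "eval_fps (fps_deriv (ofr GS)) (of_real h) = of_real (gsr' h)"
    unfolding fps_deriv_ofr gsr'_def by (rule eval_ofr[OF rad_GS' rad_GSc'])
  finally show ?thesis .
qed

lemma gsr_cont: "continuous_on A gsr"
  unfolding gsr_def by (intro continuous_at_imp_continuous_on ballI continuous_eval_fps) (simp add: rad_GS)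
lemma csr_cont: "continuous_on A csr"
  unfolding csr_def by (intro continuous_at_imp_continuous_on ballI continuous_eval_fps) (simp add: rad_CS)
lemma gsr_isCont: "isCont gsr x"
  unfolding gsr_def by (intro continuous_eval_fps) (simp add: rad_GS)
lemma csr_isCont: "isCont csr x"
  unfolding csr_def by (intro continuous_eval_fps) (simp add: rad_CS)

lemma fps_ident: "fps_const 2 * fps_X * fps_deriv GS = CS - GS"
proof (rule fps_ext)
  fix n :: nat
  show "(fps_const 2 * fps_X * fps_deriv GS) $ n = (CS - GS) $ n"
  proof (cases n)
    case 0 then show ?thesis by (simp add: GS_def CS_def gco_def cco_def)
  next
    case (Suc m)
    have f: "fact (2 * m + 3) = (2 * real m + 3) * fact (2 * m + 2)"
      by (simp add: fact_Suc numeral_3_eq_3 numeral_2_eq_2)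
    have "(fps_const 2 * fps_X * fps_deriv GS) $ n = 2 * (real m + 1) / fact (2 * m + 3)"
      using Suc by (simp add: GS_def gco_def fps_X_mult_nth mult.assoc numeral_3_eq_3 numeral_2_eq_2 field_simps)
    also have "\<dots> = 1 / fact (2 * m + 2) - 1 / fact (2 * m + 3)"
    proof -
      have g: "2 * (real m + 1) / ((2 * real m + 3) * F) = 1 / F - 1 / ((2 * real m + 3) * F)" if "F > 0" for F :: real
      proof -
        have d: "2 * real m + 3 > 0" by simp
        show ?thesis using that d by (simp add: divide_simps)
      qed
      show ?thesis unfolding f by (rule g) simp
    qed
    also have "\<dots> = (CS - GS) $ n"
      using Suc by (simp add: GS_def CS_def gco_def cco_def numeral_3_eq_3 numeral_2_eq_2)
    finally show ?thesis .
  qed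
qed

lemma deriv_ident: "2 * h * gsr' h = csr h - gsr h"
proof -
  have r1: "fps_conv_radius (fps_const 2 * fps_X :: real fps) = \<infinity>"
    using fps_conv_radius_mult[of "fps_const 2" "fps_X::real fps"] by simp
  have "eval_fps (fps_const 2 * fps_X * fps_deriv GS) h = eval_fps (fps_const 2 * fps_X) h * eval_fps (fps_deriv GS) h"
    by (rule eval_fps_mult) (simp_all add: r1 rad_GS')
  also have "eval_fps (fps_const 2 * fps_X) h = 2 * h"
    by (subst eval_fps_mult) simp_all
  finally have "eval_fps (fps_const 2 * fps_X * fps_deriv GS) h = 2 * h * gsr' h" by (simp add: gsr'_def)
  moreover have "eval_fps (CS - GS) h = csr h - gsr h"
    by (subst eval_fps_diff) (auto simp: rad_GS rad_CS csr_def gsr_def)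
  ultimately show ?thesis by (simp add: fps_ident)
qed

lemma sin_gt_xcos: assumes "0 < s" "s \<le> pi" shows "s * cos s < sin s"
proof -
  define \<phi> where "\<phi> = (\<lambda>x::real. sin x - x * cos x)"
  have d: "(\<phi> has_real_derivative x * sin x) (at x)" for x
    unfolding \<phi>_def by (auto intro!: derivative_eq_intros simp: algebra_simps)
  have "\<phi> 0 < \<phi> s"
  proof (rule DERIV_pos_imp_increasing_open[OF assms(1)])
    fix x assume "0 < x" "x < s"
    hence "x * sin x > 0" using assms by (intro mult_pos_pos sin_gt_zero) auto
    thus "\<exists>y. (\<phi> has_real_derivative y) (at x) \<and> 0 < y" using d by blast
  next
    show "continuous_on {0..s} \<phi>" unfolding \<phi>_def by (intro continuous_intros)
  qed
  thus ?thesis by (simp add: \<phi>_def)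
qed

lemma csr_gsr_pos: assumes "h > 0" shows "csr h - gsr h > 0"
proof -
  have s: "(\<lambda>n. (cco n - gco n) * h ^ n) sums (csr h - gsr h)"
    using sums_diff[OF csr_sums gsr_sums] by (simp add: algebra_simps)
  have nn: "0 \<le> (cco n - gco n) * h ^ n" for n
  proof -
    have "fact (2 * n) \<le> (fact (2 * n + 1) :: real)" by (rule fact_mono) simp
    hence "gco n \<le> cco n" unfolding gco_def cco_def by (intro divide_left_mono) auto
    thus ?thesis using assms by simp
  qed
  have p1: "0 < (cco 1 - gco 1) * h ^ 1"
    using assms by (simp add: cco_def gco_def numeral_3_eq_3 numeral_2_eq_2)
  show ?thesis using suminf_pos2[OF sums_summable[OF s] nn p1] s by (simp add: sums_iff)
qed

lemma gsr'_pos: assumes "- (pi ^ 2) \<le> h" shows "gsr' h > 0"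
proof (cases "h = 0")
  case True
  then show ?thesis by (simp add: gsr'_def eval_fps_at_0 GS_def gco_def numeral_3_eq_3)
next
  case False
  have di: "gsr' h = (csr h - gsr h) / (2 * h)" using deriv_ident[of h] False by (simp add: field_simps)
  show ?thesis
  proof (cases "h > 0")
    case True
    with csr_gsr_pos[OF True] di show ?thesis by simp
  next
    case False2: False
    with False have hn: "h < 0" by simp
    define s where "s = sqrt (- h)"
    have s: "0 < s" "h = - (s ^ 2)" using hn by (auto simp: s_def)
    have "sqrt (- h) \<le> sqrt (pi ^ 2)" using assms by (intro real_sqrt_le_mono) simp
    hence "s \<le> pi" by (simp add: s_def)
    from sin_gt_xcos[OF s(1) this] have "cos s - sin s / s < 0"
      using s(1) by (simp add: field_simps)
    hence "csr h - gsr h < 0" using hn by (simp add: csr_neg gsr_neg s_def)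
    with di hn show ?thesis by (simp add: divide_neg_neg)
  qed
qed

lemma gsr_strict_mono: assumes "- (pi ^ 2) \<le> a" "a < b" shows "gsr a < gsr b"
proof (rule DERIV_pos_imp_increasing[OF assms(2)])
  fix x assume "a \<le> x" "x \<le> b"
  thus "\<exists>y. (gsr has_real_derivative y) (at x) \<and> 0 < y"
    using gsr_deriv gsr'_pos assms by (meson order_trans)
qed

lemma gsr_mpi: "gsr (- (pi ^ 2)) = 0" by (simp add: gsr_neg)
lemma csr_mpi: "csr (- (pi ^ 2)) = -1" by (simp add: csr_neg)

lemma cs_ident: "csr h ^ 2 - h * gsr h ^ 2 = 1"
proof -
  consider "h > 0" | "h = 0" | "h < 0" by linarith
  then show ?thesis
  proof cases
    case 1
    define t where "t = sqrt h"
    have t: "t > 0" "h = t ^ 2" using 1 by (auto simp: t_def)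
    have c: "csr h = cosh t" using 1 by (simp add: csr_pos t_def)
    have g: "gsr h = sinh t / t" using 1 by (simp add: gsr_pos t_def)
    show ?thesis unfolding c g using t(1) hyperbolic_pythagoras[of t]
      by (simp add: t(2) power_divide)
  next
    case 2 then show ?thesis by (simp add: csr_0 gsr_0)
  next
    case 3
    define s where "s = sqrt (- h)"
    have s: "s > 0" "h = - (s ^ 2)" using 3 by (auto simp: s_def)
    have c: "csr h = cos s" using 3 by (simp add: csr_neg s_def)
    have g: "gsr h = sin s / s" using 3 by (simp add: gsr_neg s_def)
    show ?thesis unfolding c g using s(1) sin_cos_squared_add[of s]
      by (simp add: s(2) power_divide)
  qed
qed

lemma cs_sign: assumes "- (pi ^ 2) < h" shows "sgn (4 * h + pi ^ 2) * \<bar>csr h\<bar> = csr h"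
proof (cases "h \<ge> 0")
  case True
  have "csr h > 0" using True by (simp add: csr_pos)
  moreover have "4 * h + pi ^ 2 > 0" using True by (simp add: add_nonneg_pos)
  ultimately show ?thesis by simp
next
  case False
  define s where "s = sqrt (- h)"
  have s: "0 < s" "h = - (s ^ 2)" using False by (auto simp: s_def)
  have "sqrt (- h) < sqrt (pi ^ 2)" using assms by (intro real_sqrt_less_mono) simp
  hence "s < pi" by (simp add: s_def)
  have c: "csr h = cos s" using False by (simp add: csr_neg s_def)
  have e: "4 * h + pi ^ 2 = (pi - 2 * s) * (pi + 2 * s)" using s(2) by (simp add: algebra_simps power2_eq_square)
  have pp: "pi + 2 * s > 0" using s by (simp add: add_pos_pos)
  consider "s < pi / 2" | "s = pi / 2" | "s > pi / 2" by linarith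
  then show ?thesis
  proof cases
    case 1
    hence "cos s > 0" using s by (intro cos_gt_zero_pi) auto
    moreover have "4 * h + pi ^ 2 > 0" unfolding e using 1 pp by (intro mult_pos_pos) auto
    ultimately show ?thesis using c by simp
  next
    case 2
    hence sp: "s = pi / 2" by simp
    have "cos s = 0" unfolding sp by (rule cos_pi_half)
    then show ?thesis using c by simp
  next
    case 3
    hence "cos s < 0" using \<open>s < pi\<close> by (intro cos_lt_zero_pi) auto
    moreover have "4 * h + pi ^ 2 < 0" unfolding e using 3 pp by (intro mult_neg_pos) auto
    ultimately show ?thesis using c by simp
  qed
qed

lemma gfun_gsr: "gfun = gsr" by (rule ext) (rule gfun_eq)

lemma gsr_inj: "inj_on gsr {- (pi ^ 2)<..}"
proof (rule inj_onI)
  fix a b assume ab: "a \<in> {- (pi ^ 2)<..}" "b \<in> {- (pi ^ 2)<..}" "gsr a = gsr b"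
  show "a = b"
  proof (rule ccontr)
    assume "a \<noteq> b"
    hence "a < b \<or> b < a" by linarith
    thus False using gsr_strict_mono[of a b] gsr_strict_mono[of b a] ab by auto
  qed
qed

lemma ginv_gsr: assumes "- (pi ^ 2) < h" shows "ginv (gsr h) = h"
  unfolding ginv_def gfun_gsr using gsr_inj assms by (intro inv_into_f_f) auto

lemma gsr1: "gsr 1 > 1" using gsr_strict_mono[of 0 1] gsr_0 by (simp add: add_nonneg_pos)

lemma ginv_props:
  assumes "0 < u" "u \<le> gsr 1"
  shows "- (pi ^ 2) < ginv u" "gsr (ginv u) = u" "ginv u \<le> 1"
proof -
  have "\<exists>x. - (pi ^ 2) \<le> x \<and> x \<le> 1 \<and> gsr x = u"
    using assms gsr_mpi by (intro IVT' gsr_cont) (auto intro: order_trans[of _ 0])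
  then obtain x where x: "- (pi ^ 2) \<le> x" "x \<le> 1" "gsr x = u" by blast
  have "x \<noteq> - (pi ^ 2)" using x(3) assms gsr_mpi by auto
  with x have mem: "u \<in> gsr ` {- (pi ^ 2)<..}" by auto
  have "ginv u \<in> {- (pi ^ 2)<..}" unfolding ginv_def gfun_gsr by (rule inv_into_into[OF mem])
  thus g1a: "- (pi ^ 2) < ginv u" by simp
  show g1b: "gsr (ginv u) = u" unfolding ginv_def gfun_gsr by (rule f_inv_into_f[OF mem])
  note g1 = g1a g1b
  show "ginv u \<le> 1"
  proof (rule ccontr)
    assume "\<not> ginv u \<le> 1"
    have p: "- (pi ^ 2) \<le> (1::real)" using zero_le_power2[of pi] by linarith
    have "gsr 1 < gsr (ginv u)" using gsr_strict_mono[OF p] \<open>\<not> ginv u \<le> 1\<close> by simp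
    thus False using g1 assms by simp
  qed
qed

definition vv :: "real \<Rightarrow> real" where "vv h = 2 - 2 * csr h + h * gsr h"
definition phic :: "complex \<Rightarrow> complex" where "phic z = 2 - 2 * csc z + z * gsc z"

lemma phic_real: "phic (of_real h) = of_real (vv h)"
  by (simp add: phic_def vv_def gsc_real csc_real)

lemma Ffun_formula:
  assumes "x < 1" "1 - x \<le> gsr 1"
  shows "Ffun x = vv (ginv (1 - x))"
proof -
  define u where "u = 1 - x"
  define h where "h = ginv u"
  have u: "u > 0" using assms by (simp add: u_def)
  have h: "- (pi ^ 2) < h" "gsr h = u" using ginv_props[of u] u assms by (auto simp: u_def h_def)
  have A: "u * sqrt ((1 / u) ^ 2 + h) = \<bar>csr h\<bar>"
  proof -
    have "u * sqrt ((1 / u) ^ 2 + h) = sqrt (u ^ 2) * sqrt ((1 / u) ^ 2 + h)" using u by simp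
    also have "\<dots> = sqrt (u ^ 2 * ((1 / u) ^ 2 + h))" by (simp add: real_sqrt_mult)
    also have "u ^ 2 * ((1 / u) ^ 2 + h) = 1 + h * gsr h ^ 2"
      using u h(2) by (simp add: field_simps power2_eq_square)
    also have "\<dots> = csr h ^ 2" using cs_ident[of h] by simp
    finally show ?thesis by simp
  qed
  have "Ffun x = u * Gfun (1 / u)" by (simp add: Ffun_def u_def)
  also have "\<dots> = u * (2 * (1 / u) - 2 * sgn (4 * h + pi ^ 2) * sqrt ((1 / u) ^ 2 + h) + h)"
    by (simp add: Gfun_def h_def)
  also have "\<dots> = 2 - 2 * (sgn (4 * h + pi ^ 2) * (u * sqrt ((1 / u) ^ 2 + h))) + u * h"
    using u by (simp add: field_simps)
  also have "\<dots> = vv h" unfolding A cs_sign[OF h(1)] vv_def using h(2) by simp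
  finally show ?thesis by (simp add: h_def u_def)
qed

lemma Ffun_0: "Ffun 0 = 0"
proof -
  have "ginv 1 = 0" using ginv_gsr[of 0] gsr_0 by simp
  thus ?thesis using Ffun_formula[of 0] gsr1 by (simp add: vv_def csr_0)
qed

lemma gsc_hol: "gsc holomorphic_on A"
  unfolding gsc_def by (intro holomorphic_on_eval_fps) (simp add: rad_GSc)
lemma csc_hol: "csc holomorphic_on A"
  unfolding csc_def by (intro holomorphic_on_eval_fps) (simp add: rad_CSc)
lemma phic_hol: "phic holomorphic_on A"
  unfolding phic_def[abs_def] by (intro holomorphic_intros gsc_hol csc_hol)

lemma local_inverse:
  assumes "0 \<le> x0" "x0 < 1"
  obtains e Q where "e > 0" "Q holomorphic_on ball (of_real (1 - x0)) e"
    "\<And>x. \<bar>x - x0\<bar> < e \<Longrightarrow> Q (of_real (1 - x)) = of_real (ginv (1 - x))"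
    "\<And>x. \<bar>x - x0\<bar> < e \<Longrightarrow> x < 1 \<and> 1 - x \<le> gsr 1"
proof -
  define u0 where "u0 = 1 - x0"
  have u0: "0 < u0" "u0 \<le> 1" using assms by (auto simp: u0_def)
  define h0 where "h0 = ginv u0"
  have h0: "- (pi ^ 2) < h0" "gsr h0 = u0" using ginv_props[of u0] u0 gsr1 by (auto simp: h0_def)
  have "deriv gsc (of_real h0) = of_real (gsr' h0)" by (rule DERIV_imp_deriv[OF gsc_deriv])
  hence dnz: "deriv gsc (of_real h0) \<noteq> 0" using gsr'_pos[of h0] h0 by auto
  obtain r where r: "r > 0" "inj_on gsc (ball (of_real h0) r)"
    using has_complex_derivative_locally_injective[OF gsc_hol[of UNIV] _ _ dnz] by auto
  obtain Q where Q: "Q holomorphic_on gsc ` ball (of_real h0) r"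
      "\<And>z. z \<in> ball (of_real h0) r \<Longrightarrow> Q (gsc z) = z"
    using holomorphic_has_inverse[OF gsc_hol open_ball r(2)] by metis
  have W: "open (gsc ` ball (of_real h0) r)" by (rule open_mapping_thm3[OF gsc_hol open_ball r(2)])
  have "of_real u0 \<in> gsc ` ball (of_real h0) r"
    using r(1) h0(2) by (auto simp: gsc_real intro!: image_eqI[of _ _ "of_real h0"])
  then obtain e1 where e1: "e1 > 0" "ball (of_real u0) e1 \<subseteq> gsc ` ball (of_real h0) r"
    using W openE by blast
  have ic: "isCont ginv (gsr h0)"
  proof (rule isCont_inverse_function[where d = "(h0 + pi ^ 2) / 2" and f = gsr and x = h0 and g = ginv])
    show "0 < (h0 + pi ^ 2) / 2" using h0 by simp
    fix z assume a: "\<bar>z - h0\<bar> \<le> (h0 + pi ^ 2) / 2"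
    have "- (z - h0) \<le> \<bar>z - h0\<bar>" by (rule abs_ge_minus_self)
    hence "h0 - (h0 + pi ^ 2) / 2 \<le> z" using a by linarith
    hence "- (pi ^ 2) < z" using h0(1) by (simp add: field_simps)
    thus "ginv (gsr z) = z" by (rule ginv_gsr)
  next
    fix z show "isCont gsr z" by (rule gsr_isCont)
  qed
  then obtain \<delta> where \<delta>: "\<delta> > 0" "\<And>u. \<bar>u - u0\<bar> < \<delta> \<Longrightarrow> \<bar>ginv u - h0\<bar> < r"
  proof -
    have "ginv \<midarrow>u0\<rightarrow> h0" using ic h0 by (simp add: isCont_def h0_def)
    then obtain s where s: "s > 0" "\<And>u. u \<noteq> u0 \<Longrightarrow> norm (u - u0) < s \<Longrightarrow> norm (ginv u - h0) < r"
      using r(1) unfolding LIM_eq by blast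
    show ?thesis
    proof (rule that[OF s(1)])
      fix u assume "\<bar>u - u0\<bar> < s"
      thus "\<bar>ginv u - h0\<bar> < r" using s(2)[of u] r(1) by (cases "u = u0") (auto simp: h0_def)
    qed
  qed
  have g1: "gsr 1 - 1 > 0" using gsr1 by simp
  define e where "e = min (min e1 \<delta>) (min (u0 / 2) (gsr 1 - 1))"
  have e: "e > 0" using e1 \<delta> u0 g1 by (simp add: e_def)
  show ?thesis
  proof (rule that[OF e])
    show "Q holomorphic_on ball (of_real (1 - x0)) e"
      by (rule holomorphic_on_subset[OF Q(1)]) (use e1 in \<open>auto simp: e_def u0_def\<close>)
  next
    fix x assume x: "\<bar>x - x0\<bar> < e"
    have xa: "\<bar>x - x0\<bar> < (1 - x0) / 2" "\<bar>x - x0\<bar> < gsr 1 - 1" using x by (auto simp: e_def u0_def)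
    have ax: "x - x0 \<le> \<bar>x - x0\<bar>" "x0 - x \<le> \<bar>x - x0\<bar>" by auto
    show xr: "x < 1 \<and> 1 - x \<le> gsr 1" using xa ax assms by argo
    define u where "u = 1 - x"
    have uu: "\<bar>u - u0\<bar> < e" using x by (simp add: u_def u0_def abs_minus_commute)
    have up: "0 < u" "u \<le> gsr 1" using xr by (auto simp: u_def)
    define h where "h = ginv u"
    have h: "gsr h = u" "\<bar>h - h0\<bar> < r" using ginv_props(2)[OF up] \<delta>(2)[of u] uu
      by (auto simp: h_def e_def)
    have "of_real h \<in> ball (of_real h0 :: complex) r"
      using h(2) by (simp add: dist_norm abs_minus_commute flip: of_real_diff)
    from Q(2)[OF this] have "Q (of_real u) = of_real h" using h(1) by (simp add: gsc_real)
    thus "Q (of_real (1 - x)) = of_real (ginv (1 - x))" by (simp add: u_def h_def)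
  qed
qed

lemma locext_Ffun: assumes "0 \<le> x0" "x0 < 1" shows "locext Ffun x0"
proof -
  obtain e Q where eQ: "e > 0" "Q holomorphic_on ball (of_real (1 - x0)) e"
    "\<And>x. \<bar>x - x0\<bar> < e \<Longrightarrow> Q (of_real (1 - x)) = of_real (ginv (1 - x))"
    "\<And>x. \<bar>x - x0\<bar> < e \<Longrightarrow> x < 1 \<and> 1 - x \<le> gsr 1"
    using local_inverse[OF assms] by blast
  have hol: "(\<lambda>z. phic (Q (1 - z))) holomorphic_on ball (of_real x0) e"
  proof -
    have "(\<lambda>z. 1 - z) ` ball (of_real x0 :: complex) e \<subseteq> ball (of_real (1 - x0)) e"
    proof -
      have dd: "\<And>z::complex. dist (1 - of_real x0) (1 - z) = dist (of_real x0) z"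
        by (simp add: dist_norm norm_minus_commute algebra_simps)
      show ?thesis using dd by auto
    qed
    moreover have h1: "(\<lambda>z. 1 - z) holomorphic_on ball (of_real x0 :: complex) e"
      by (intro holomorphic_intros)
    ultimately have "(\<lambda>z. Q (1 - z)) holomorphic_on ball (of_real x0) e"
      using holomorphic_on_compose_gen[OF h1 eQ(2)] by (simp add: o_def)
    thus ?thesis
      using holomorphic_on_compose[of "\<lambda>z. Q (1 - z)" _ phic] phic_hol by (auto simp: o_def)
  qed
  have eq: "phic (Q (1 - of_real x)) = of_real (Ffun x)" if "\<bar>x - x0\<bar> < e" for x
  proof -
    have "phic (Q (1 - of_real x)) = phic (of_real (ginv (1 - x)))" using eQ(3)[OF that] by simp
    also have "\<dots> = of_real (vv (ginv (1 - x)))" by (rule phic_real)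
    also have "vv (ginv (1 - x)) = Ffun x" using eQ(4)[OF that] by (simp add: Ffun_formula)
    finally show ?thesis .
  qed
  show ?thesis unfolding locext_def using eQ(1) hol eq by blast
qed

lemma acoef1_zero: "(deriv ^^ 1) Ffun 0 = 0"
proof -
  obtain e Q where eQ: "e > 0" "Q holomorphic_on ball (of_real (1 - 0)) e"
    "\<And>x. \<bar>x - 0\<bar> < e \<Longrightarrow> Q (of_real (1 - x)) = of_real (ginv (1 - x))"
    "\<And>x. \<bar>x - 0\<bar> < e \<Longrightarrow> x < 1 \<and> 1 - x \<le> gsr 1"
    using local_inverse[of 0] by auto
  have hol: "(\<lambda>z. phic (Q (1 - z))) holomorphic_on ball (of_real 0) e"
  proof -
    have dd: "\<And>z::complex. dist (1 - of_real 0) (1 - z) = dist (of_real 0) z"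
      by (simp add: dist_norm norm_minus_commute algebra_simps)
    have sub: "(\<lambda>z. 1 - z) ` ball (of_real 0 :: complex) e \<subseteq> ball (of_real (1 - 0)) e"
      using dd by auto
    have h1: "(\<lambda>z. 1 - z) holomorphic_on ball (of_real 0 :: complex) e"
      by (intro holomorphic_intros)
    have "(\<lambda>z. Q (1 - z)) holomorphic_on ball (of_real 0) e"
      using holomorphic_on_compose_gen[OF h1 eQ(2) sub] by (simp add: o_def)
    thus ?thesis
      using holomorphic_on_compose[of "\<lambda>z. Q (1 - z)" _ phic] phic_hol by (auto simp: o_def)
  qed
  have eq: "phic (Q (1 - of_real x)) = of_real (Ffun x)" if "\<bar>x - 0\<bar> < e" for x
  proof -
    have "phic (Q (1 - of_real x)) = phic (of_real (ginv (1 - x)))" using eQ(3)[OF that] by simp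
    also have "\<dots> = of_real (vv (ginv (1 - x)))" by (rule phic_real)
    also have "vv (ginv (1 - x)) = Ffun x" using eQ(4)[OF that] by (simp add: Ffun_formula)
    finally show ?thesis by simp
  qed
  have ginv1: "ginv 1 = 0" using ginv_gsr[of 0] gsr_0 by simp
  have Q1: "Q 1 = 0" using eQ(3)[of 0] eQ(1) ginv1 by simp
  have dQ: "(Q has_field_derivative deriv Q 1) (at 1)"
    using eQ(1,2) by (intro holomorphic_derivI[of _ "ball (of_real (1 - 0)) e"]) auto
  have dcsc: "(csc has_field_derivative 1 / 2) (at 0)"
  proof -
    have "(csc has_field_derivative eval_fps (fps_deriv (ofr CS)) 0) (at 0)"
      unfolding csc_def by (rule has_field_derivative_eval_fps) (simp add: rad_CSc)
    also have "eval_fps (fps_deriv (ofr CS)) 0 = 1 / 2"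
      by (simp add: eval_fps_at_0 ofr_def CS_def cco_def)
    finally show ?thesis .
  qed
  obtain D where dgsc: "(gsc has_field_derivative D) (at 0)"
    using gsc_deriv[of 0] by auto
  have gsc0: "gsc 0 = 1" by (simp add: gsc_def eval_fps_at_0 ofr_def GS_def gco_def)
  have dphi: "(phic has_field_derivative 0) (at (Q (1 - 0)))"
  proof -
    have "((\<lambda>z. 2 - 2 * csc z + z * gsc z) has_field_derivative (0 - 2 * (1 / 2) + (1 * gsc 0 + 0 * D))) (at 0)"
    proof (intro DERIV_add DERIV_diff DERIV_const)
      show "((\<lambda>z. 2 * csc z) has_field_derivative 2 * (1 / 2)) (at 0)" by (intro DERIV_cmult dcsc)
      show "((\<lambda>z. z * gsc z) has_field_derivative 1 * gsc 0 + 0 * D) (at 0)"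
        using DERIV_mult[OF DERIV_ident dgsc] by simp
    qed
    thus ?thesis using Q1 gsc0 by (simp add: phic_def[abs_def])
  qed
  have d1: "((\<lambda>z. 1 - z) has_field_derivative -1) (at (0::complex))"
    by (auto intro!: derivative_eq_intros)
  have dF: "((\<lambda>z. phic (Q (1 - z))) has_field_derivative 0 * (deriv Q 1 * -1)) (at 0)"
  proof -
    have dQ1: "((\<lambda>z. Q (1 - z)) has_field_derivative deriv Q 1 * -1) (at 0)"
      using DERIV_chain2[where f=Q and g="\<lambda>z. 1 - z" and x=0 and Da="deriv Q 1" and Db="-1" and s=UNIV] dQ d1
      by simp
    show ?thesis
      using DERIV_chain2[where f=phic and g="\<lambda>z. Q (1 - z)" and x=0 and Da=0 and Db="deriv Q 1 * -1" and s=UNIV] dphi dQ1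
      by simp
  qed
  have "(deriv ^^ 1) Ffun 0 = Re ((deriv ^^ 1) (\<lambda>z. phic (Q (1 - z))) (of_real 0))"
    by (rule transfer_deriv[OF hol]) (use eq eQ(1) in \<open>auto\<close>)
  also have "\<dots> = 0" using DERIV_imp_deriv[OF dF] by simp
  finally show ?thesis .
qed

lemma Ffun_le4: assumes "0 \<le> x" "x < 1" shows "Ffun x \<le> 4"
proof -
  have up: "0 < 1 - x" "1 - x \<le> gsr 1" using assms gsr1 by auto
  define h where "h = ginv (1 - x)"
  have h: "- (pi ^ 2) < h" "gsr h = 1 - x" using ginv_props[OF up] by (auto simp: h_def)
  have "h \<le> 0"
  proof (rule ccontr)
    assume "\<not> h \<le> 0"
    hence "gsr 0 < gsr h" using gsr_strict_mono[of 0 h] by simp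
    thus False using h gsr_0 assms by simp
  qed
  have F: "Ffun x = vv h" using Ffun_formula[of x] assms up by (simp add: h_def)
  show ?thesis
  proof (cases "h = 0")
    case True then show ?thesis using F by (simp add: vv_def csr_0 gsr_0)
  next
    case False
    with \<open>h \<le> 0\<close> have hn: "h < 0" by simp
    define s where "s = sqrt (- h)"
    have s: "0 < s" "h = - (s ^ 2)" using hn by (auto simp: s_def)
    have "sqrt (- h) < sqrt (pi ^ 2)" using h(1) by (intro real_sqrt_less_mono) simp
    hence sp: "s < pi" by (simp add: s_def)
    have c: "csr h = cos s" using hn by (simp add: csr_neg s_def)
    have g: "gsr h = sin s / s" using hn by (simp add: gsr_neg s_def)
    have "h * gsr h = - (s * sin s)" unfolding g using s by (simp add: power2_eq_square)
    moreover have "s * sin s \<ge> 0" using s sp by (intro mult_nonneg_nonneg sin_ge_zero) auto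
    ultimately have "vv h \<le> 2 - 2 * cos s" unfolding vv_def c by simp
    thus ?thesis using F cos_ge_minus_one[of s] by argo
  qed
qed

lemma Ffun_near4: assumes "\<epsilon> > 0" obtains x where "0 \<le> x" "x < 1" "Ffun x > 4 - \<epsilon>"
proof -
  have "isCont vv (- (pi ^ 2))"
    unfolding vv_def[abs_def] by (intro continuous_intros csr_isCont gsr_isCont)
  moreover have "vv (- (pi ^ 2)) = 4" by (simp add: vv_def csr_mpi gsr_mpi)
  ultimately have "vv \<midarrow>(- (pi ^ 2))\<rightarrow> 4" by (simp add: isCont_def)
  then obtain d where d: "d > 0" "\<And>h. h \<noteq> - (pi ^ 2) \<Longrightarrow> norm (h - - (pi ^ 2)) < d \<Longrightarrow> norm (vv h - 4) < \<epsilon>"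
    using assms unfolding LIM_eq by blast
  define h where "h = - (pi ^ 2) + min (d / 2) (pi ^ 2 / 2)"
  have pp: "pi ^ 2 > 0" by simp
  have m1: "min (d / 2) (pi ^ 2 / 2) \<le> pi ^ 2 / 2" "min (d / 2) (pi ^ 2 / 2) \<le> d / 2"
    "min (d / 2) (pi ^ 2 / 2) > 0" using d pp by auto
  have h1: "- (pi ^ 2) < h" "h < 0" using m1 pp unfolding h_def by argo+
  have h2: "norm (h - - (pi ^ 2)) < d" using d m1 unfolding h_def by simp
  have vh: "vv h > 4 - \<epsilon>" using d(2)[OF _ h2] h1 by auto
  have g0: "0 < gsr h" using gsr_strict_mono[of "- (pi ^ 2)" h] h1 gsr_mpi by simp
  have g1: "gsr h < 1" using gsr_strict_mono[of h 0] h1 gsr_0 by simp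
  define x where "x = 1 - gsr h"
  have x: "0 \<le> x" "x < 1" using g0 g1 by (auto simp: x_def)
  have "Ffun x = vv (ginv (1 - x))" using Ffun_formula[of x] x g1 gsr1 by (simp add: x_def)
  also have "ginv (1 - x) = h" using ginv_gsr[OF h1(1)] by (simp add: x_def)
  finally show ?thesis using that x vh by simp
qed

theorem corollary3p3:
  assumes "\<forall>n\<ge>2. acoef n > 0"
  shows "(\<lambda>n. acoef (n + 2)) sums 4"
proof -
  have a0: "acoef 0 = 0" by (simp add: acoef_def Ffun_0)
  have a1: "acoef 1 = 0" using acoef1_zero by (simp add: acoef_def)
  have pos: "(deriv ^^ n) Ffun 0 \<ge> 0" for n
  proof -
    consider "n = 0" | "n = 1" | "n \<ge> 2" by linarith
    then show ?thesis
    proof cases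
      case 1 then show ?thesis by (simp add: Ffun_0)
    next
      case 2 then show ?thesis using acoef1_zero by simp
    next
      case 3
      hence "acoef n > 0" using assms by simp
      thus ?thesis by (simp add: acoef_def divide_pos_pos zero_less_divide_iff)
    qed
  qed
  have sums: "(\<lambda>n. acoef n * x ^ n) sums Ffun x" if "0 \<le> x" "x < 1" for x
    using pringsheim_real[of Ffun x, OF locext_Ffun pos that] by (simp add: acoef_def)
  define b where "b = (\<lambda>n. acoef (n + 2))"
  have bpos: "b n > 0" for n using assms by (simp add: b_def)
  have sums2: "(\<lambda>n. b n * x ^ (n + 2)) sums Ffun x" if "0 \<le> x" "x < 1" for x
    using sums_split_initial_segment[OF sums[OF that], of 2] a0 a1
    by (simp add: b_def numeral_2_eq_2)
  have bound: "(\<Sum>n<N. b n) \<le> 4" for N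
  proof -
    have lim: "((\<lambda>x. \<Sum>n<N. b n * x ^ (n + 2)) \<longlongrightarrow> (\<Sum>n<N. b n * 1 ^ (n + 2))) (at_left 1)"
      by (intro tendsto_intros)
    have ev0: "eventually (\<lambda>x. x \<in> {0<..<1}) (at_left (1::real))"
      by (rule eventually_at_left_real) simp
    have ev: "eventually (\<lambda>x. (\<Sum>n<N. b n * x ^ (n + 2)) \<le> 4) (at_left (1::real))"
      using ev0
    proof (rule eventually_mono)
      fix x :: real assume "x \<in> {0<..<1}"
      hence x: "0 \<le> x" "x < 1" by auto
      have nn: "0 \<le> b n * x ^ (n + 2)" for n using bpos[of n] x by simp
      have "(\<Sum>n<N. b n * x ^ (n + 2)) \<le> (\<Sum>n. b n * x ^ (n + 2))"
        by (rule sum_le_suminf) (use sums2[OF x] nn in \<open>auto simp: sums_iff\<close>)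
      also have "\<dots> = Ffun x" using sums2[OF x] by (simp add: sums_iff)
      also have "\<dots> \<le> 4" by (rule Ffun_le4[OF x])
      finally show "(\<Sum>n<N. b n * x ^ (n + 2)) \<le> 4" .
    qed
    have "(\<Sum>n<N. b n * 1 ^ (n + 2)) \<le> 4"
      by (rule tendsto_le[OF trivial_limit_at_left_real tendsto_const lim ev])
    thus ?thesis by simp
  qed
  have summ: "summable b"
    by (rule summableI_nonneg_bounded[OF _ bound]) (simp add: less_imp_le bpos)
  have S4: "suminf b \<le> 4" by (rule suminf_le_const[OF summ bound])
  have "4 \<le> suminf b"
  proof (rule ccontr)
    assume "\<not> 4 \<le> suminf b"
    then obtain x where x: "0 \<le> x" "x < 1" "Ffun x > 4 - (4 - suminf b)"
      using Ffun_near4[of "4 - suminf b"] by auto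
    have "Ffun x \<le> suminf b"
    proof -
      have "Ffun x = (\<Sum>n. b n * x ^ (n + 2))" using sums2[OF x(1,2)] by (simp add: sums_iff)
      also have "\<dots> \<le> suminf b"
      proof (rule suminf_le)
        show "summable (\<lambda>n. b n * x ^ (n + 2))" using sums2[OF x(1,2)] by (simp add: sums_iff)
        show "summable b" by (rule summ)
        fix n
        have "x ^ (n + 2) \<le> 1" using x by (intro power_le_one) auto
        thus "b n * x ^ (n + 2) \<le> b n" using bpos[of n] by (simp add: mult_left_le)
      qed
      finally show ?thesis .
    qed
    thus False using x by simp
  qed
  with S4 have "suminf b = 4" by simp
  with summ show ?thesis unfolding b_def by (metis summable_sums b_def)
qed

end
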